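(* For every real number $x$, \[ |\cos x|\le \frac{2}{3}+\frac{7}{18}\cos 2x-\frac{1}{18}\cos 4x. \] *)

theory Defs
  imports Complex_Main
begin

end

theory Submission
  imports Defs
begin

theorem lemma2p1:
  fixes x :: real
  shows "\<bar>cos x\<bar> \<le> 2/3 + 7/18 * cos (2*x) - 1/18 * cos (4*x)"
proof -
  define a where "a = \<bar>cos x\<bar>"
  have a0: "0 \<le> a" and a1: "a \<le> 1" using abs_cos_le_one[of x] by (auto simp: a_def)
  have c2: "cos x ^ 2 = a ^ 2" by (simp add: a_def)
  have e2: "cos (2*x) = 2 * a^2 - 1" using cos_double_cos[of x] c2 by simp
  have "cos (4*x) = cos (2*(2*x))" by simp
  also have "\<dots> = 2 * (cos (2*x))^2 - 1" by (rule cos_double_cos)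
  finally have e4: "cos (4*x) = 2 * (2 * a^2 - 1)^2 - 1" using e2 by simp
  have key: "(a - 1) * (2*a - 1)^2 * (a + 2) \<le> 0"
    using a0 a1 by (intro mult_nonpos_nonneg mult_nonpos_nonneg) auto
  have "a \<le> 2/3 + 7/18 * (2 * a^2 - 1) - 1/18 * (2 * (2 * a^2 - 1)^2 - 1)"
    using key by (simp add: field_simps power2_eq_square power3_eq_cube power4_eq_xxxx)
  then show ?thesis using e2 e4 by (simp add: a_def)
qed

end
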